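(* Let $A,M\in\mathbb{R}^{n\times n}$ with $M$ nonsingular, $B\in\mathbb{R}^{n\times r}$, $j_{\max}\ge1$, shifts $\alpha_1,\ldots,\alpha_{j_{\max}}\in\mathbb{C}$ with $\mathrm{Re}(\alpha_k)<0$ and $A+\alpha_kM$ nonsingular, and $0<\varepsilon<1$. Run the inexact LR-ADI iteration of the context for $j_{\max}$ steps, and set $\sigma_k:=\|M(A+\alpha_kM)^{-1}\|$. (a) If for all $1\le k\le j_{\max}$ $$\|s_k\|\le\tfrac12\Big(\sqrt{\|w_{k-1}\|^2+\tfrac{2\varepsilon}{\sigma_k\gamma_k^2j_{\max}}}-\|w_{k-1}\|\Big),$$ then $\|\Delta\mathcal{R}_{j_{\max}}\|\le\varepsilon$. (b) If for all $1\le k\le j_{\max}$ $$\|s_k\|\le\tfrac12\Big(\sqrt{\|w_{k-1}\|^2+\Big(\tfrac{k\varepsilon}{j_{\max}}-2\|\eta_{k-1}\|\Big)\tfrac{2}{\sigma_k\gamma_k^2}}-\|w_{k-1}\|\Big),$$ then $\|\Delta\mathcal{R}_{j_{\max}}\|\le\varepsilon$.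
   Context: Inexact LR-ADI iteration: $w_0:=B$, $\gamma_k:=\sqrt{-2\,\mathrm{Re}(\alpha_k)}$; for $k\ge1$, $v_k\in\mathbb{C}^{n\times r}$ is an arbitrary approximate solution of $(A+\alpha_kM)v=w_{k-1}$ with residual $s_k:=w_{k-1}-(A+\alpha_kM)v_k$, $w_k:=w_{k-1}+\gamma_k^2Mv_k$, $Z_k:=[\gamma_1v_1,\ldots,\gamma_kv_k]$, $S_k:=[s_1,\ldots,s_k]$, $\Gamma_k:=\mathrm{diag}(\gamma_1,\ldots,\gamma_k)\otimes I_r$. True residual $\mathcal{R}^{\mathrm{true}}_k:=AZ_kZ_k^*M^*+MZ_kZ_k^*A^*+BB^*$, computed residual $\mathcal{R}^{\mathrm{comp}}_k:=w_kw_k^*$, residual gap $\Delta\mathcal{R}_k:=\mathcal{R}^{\mathrm{true}}_k-\mathcal{R}^{\mathrm{comp}}_k$, and $\eta_k:=-S_k\Gamma_kZ_k^*M^*$ for $k\ge1$, $\eta_0:=0$. Norms are spectral. *)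

theory Defs
  imports "HOL-Analysis.Analysis"
begin

definition cmat :: "real^'c^'d \<Rightarrow> complex^'c^'d" where
  "cmat X = (\<chi> i j. complex_of_real (X $ i $ j))"

definition adj :: "complex^'c^'d \<Rightarrow> complex^'d^'c" where
  "adj X = (\<chi> i j. cnj (X $ j $ i))"

definition snorm :: "complex^'c^'d \<Rightarrow> real" where
  "snorm X = onorm (\<lambda>x. X *v x)"

definition adi_gamma :: "(nat \<Rightarrow> complex) \<Rightarrow> nat \<Rightarrow> real" where
  "adi_gamma \<alpha> k = sqrt (- 2 * Re (\<alpha> k))"

primrec adi_w :: "real^'n^'n \<Rightarrow> real^'r^'n \<Rightarrow> (nat \<Rightarrow> complex) \<Rightarrow> (nat \<Rightarrow> complex^'r^'n)
                   \<Rightarrow> nat \<Rightarrow> complex^'r^'n" where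
  "adi_w M B \<alpha> v 0 = cmat B"
| "adi_w M B \<alpha> v (Suc k) = adi_w M B \<alpha> v k + ((adi_gamma \<alpha> (Suc k))\<^sup>2) *\<^sub>R (cmat M ** v (Suc k))"

definition adi_s :: "real^'n^'n \<Rightarrow> real^'n^'n \<Rightarrow> real^'r^'n \<Rightarrow> (nat \<Rightarrow> complex)
                   \<Rightarrow> (nat \<Rightarrow> complex^'r^'n) \<Rightarrow> nat \<Rightarrow> complex^'r^'n" where
  "adi_s A M B \<alpha> v k = adi_w M B \<alpha> v (k - 1) - (cmat A + mat (\<alpha> k) ** cmat M) ** v k"

text \<open>Z_k Z_k^* = sum_{i=1..k} (gamma_i v_i)(gamma_i v_i)^*.\<close>
definition adi_ZZ :: "(nat \<Rightarrow> complex) \<Rightarrow> (nat \<Rightarrow> complex^'r^'n) \<Rightarrow> nat \<Rightarrow> complex^'n^'n" where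
  "adi_ZZ \<alpha> v k = (\<Sum>i=1..k. (adi_gamma \<alpha> i *\<^sub>R v i) ** adj (adi_gamma \<alpha> i *\<^sub>R v i))"

definition adi_Rtrue :: "real^'n^'n \<Rightarrow> real^'n^'n \<Rightarrow> real^'r^'n \<Rightarrow> (nat \<Rightarrow> complex)
                   \<Rightarrow> (nat \<Rightarrow> complex^'r^'n) \<Rightarrow> nat \<Rightarrow> complex^'n^'n" where
  "adi_Rtrue A M B \<alpha> v k =
     cmat A ** adi_ZZ \<alpha> v k ** adj (cmat M) + cmat M ** adi_ZZ \<alpha> v k ** adj (cmat A)
     + cmat B ** adj (cmat B)"

definition adi_gap :: "real^'n^'n \<Rightarrow> real^'n^'n \<Rightarrow> real^'r^'n \<Rightarrow> (nat \<Rightarrow> complex)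
                   \<Rightarrow> (nat \<Rightarrow> complex^'r^'n) \<Rightarrow> nat \<Rightarrow> complex^'n^'n" where
  "adi_gap A M B \<alpha> v k = adi_Rtrue A M B \<alpha> v k - adi_w M B \<alpha> v k ** adj (adi_w M B \<alpha> v k)"

text \<open>eta_k = - S_k Gamma_k Z_k^* M^* = - sum_{i=1..k} (gamma_i s_i)(gamma_i v_i)^* M^*;
  for k = 0 the sum is empty, so eta_0 = 0.\<close>
definition adi_eta :: "real^'n^'n \<Rightarrow> real^'n^'n \<Rightarrow> real^'r^'n \<Rightarrow> (nat \<Rightarrow> complex)
                   \<Rightarrow> (nat \<Rightarrow> complex^'r^'n) \<Rightarrow> nat \<Rightarrow> complex^'n^'n" where
  "adi_eta A M B \<alpha> v k =
     - (\<Sum>i=1..k. (adi_gamma \<alpha> i *\<^sub>R adi_s A M B \<alpha> v i) ** adj (adi_gamma \<alpha> i *\<^sub>R v i) ** adj (cmat M))"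

definition adi_sigma :: "real^'n^'n \<Rightarrow> real^'n^'n \<Rightarrow> (nat \<Rightarrow> complex) \<Rightarrow> nat \<Rightarrow> real" where
  "adi_sigma A M \<alpha> k = snorm (cmat M ** matrix_inv (cmat A + mat (\<alpha> k) ** cmat M))"

end

theory Submission
  imports Defs
begin

lemma cscale: "r *\<^sub>R (z::complex) = of_real r * z"
  by (simp add: scaleR_conv_of_real)

lemma bl: "bounded_linear (\<lambda>x. (X::complex^'c^'d) *v x)"
  by (simp add: linear_conv_bounded_linear)

lemma snorm_nonneg: "0 \<le> snorm X"
  unfolding snorm_def by (rule onorm_pos_le[OF bl])

lemma snorm_vec: "norm (X *v x) \<le> snorm X * norm x"
  unfolding snorm_def by (rule onorm[OF bl])

lemma snorm_mult: "snorm ((X::complex^'c^'d) ** (Y::complex^'e^'c)) \<le> snorm X * snorm Y"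
proof -
  have "(\<lambda>x. (X ** Y) *v x) = (\<lambda>x. X *v x) \<circ> (\<lambda>x. Y *v x)"
    by (auto simp: matrix_vector_mul_assoc)
  then show ?thesis unfolding snorm_def using onorm_compose[OF bl bl] by metis
qed

lemma mv_add: "((X::complex^'c^'d) + Y) *v x = X *v x + Y *v x"
  by (simp add: matrix_vector_mult_def vec_eq_iff sum.distrib algebra_simps)
lemma mv_neg: "(- (X::complex^'c^'d)) *v x = - (X *v x)"
  by (simp add: matrix_vector_mult_def vec_eq_iff sum_negf)
lemma mv_scaleR: "(r *\<^sub>R (X::complex^'c^'d)) *v x = r *\<^sub>R (X *v x)"
  by (simp add: matrix_vector_mult_def vec_eq_iff cscale sum_distrib_left algebra_simps)

lemma snorm_add: "snorm ((X::complex^'c^'d) + Y) \<le> snorm X + snorm Y"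
  unfolding snorm_def mv_add by (rule onorm_triangle[OF bl bl])
lemma snorm_neg: "snorm (- (X::complex^'c^'d)) = snorm X"
  unfolding snorm_def mv_neg by (rule onorm_neg)
lemma snorm_scaleR: "snorm (r *\<^sub>R (X::complex^'c^'d)) = \<bar>r\<bar> * snorm X"
  unfolding snorm_def mv_scaleR by (rule onorm_scaleR[OF bl])
lemma snorm_diff: "snorm ((X::complex^'c^'d) - Y) \<le> snorm X + snorm Y"
  using snorm_add[of X "-Y"] snorm_neg[of Y] by simp

lemma adj_adj[simp]: "adj (adj X) = X"
  by (simp add: adj_def vec_eq_iff)
lemma adj_add: "adj (X + Y) = adj X + adj Y"
  by (simp add: adj_def vec_eq_iff)
lemma adj_diff: "adj (X - Y) = adj X - adj Y"
  by (simp add: adj_def vec_eq_iff)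
lemma adj_neg: "adj (- X) = - adj X"
  by (simp add: adj_def vec_eq_iff)
lemma adj_scaleR: "adj (r *\<^sub>R X) = r *\<^sub>R adj X"
  by (simp add: adj_def vec_eq_iff cscale)
lemma adj_zero: "adj 0 = 0"
  by (simp add: adj_def vec_eq_iff)
lemma adj_mult: "adj ((X::complex^'c^'d) ** (Y::complex^'e^'c)) = adj Y ** adj X"
  by (simp add: adj_def vec_eq_iff matrix_matrix_mult_def mult.commute)

lemma mm_add_r: "((X::complex^'c^'d) + Y) ** (Z::complex^'e^'c) = X ** Z + Y ** Z"
  by (simp add: matrix_matrix_mult_def vec_eq_iff sum.distrib algebra_simps)
lemma mm_diff_r: "((X::complex^'c^'d) - Y) ** (Z::complex^'e^'c) = X ** Z - Y ** Z"
  by (simp add: matrix_matrix_mult_def vec_eq_iff sum_subtractf algebra_simps)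
lemma mm_diff_l: "(Z::complex^'c^'d) ** ((X::complex^'e^'c) - Y) = Z ** X - Z ** Y"
  by (simp add: matrix_matrix_mult_def vec_eq_iff sum_subtractf algebra_simps)
lemma mm_neg_r: "(- (X::complex^'c^'d)) ** (Z::complex^'e^'c) = - (X ** Z)"
  by (simp add: matrix_matrix_mult_def vec_eq_iff sum_negf)
lemma mm_neg_l: "(Z::complex^'c^'d) ** (- (X::complex^'e^'c)) = - (Z ** X)"
  by (simp add: matrix_matrix_mult_def vec_eq_iff sum_negf)

definition csm :: "complex \<Rightarrow> complex^'c^'d \<Rightarrow> complex^'c^'d" where
  "csm c X = (\<chi> i j. c * X $ i $ j)"

lemma mat_csm: "mat c ** (X::complex^'c^'d) = csm c X"
  by (simp add: csm_def mat_def matrix_matrix_mult_def vec_eq_iff if_distrib if_distribR cong: if_cong)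
lemma csm_mult_l: "csm c (X::complex^'c^'d) ** (Y::complex^'e^'c) = csm c (X ** Y)"
  by (simp add: csm_def matrix_matrix_mult_def vec_eq_iff sum_distrib_left mult.assoc)
lemma csm_mult_r: "(X::complex^'c^'d) ** csm c (Y::complex^'e^'c) = csm c (X ** Y)"
  by (simp add: csm_def matrix_matrix_mult_def vec_eq_iff sum_distrib_left algebra_simps)
lemma adj_csm: "adj (csm c X) = csm (cnj c) (adj X)"
  by (simp add: csm_def adj_def vec_eq_iff)
lemma csm_cnj: "csm c P + csm (cnj c) P = (2 * Re c) *\<^sub>R P"
proof -
  have "c * z + cnj c * z = 2 * (complex_of_real (Re c) * z)" for z
  proof -
    have "c * z + cnj c * z = (c + cnj c) * z" by (simp add: distrib_right)
    also have "\<dots> = 2 * (complex_of_real (Re c) * z)" by (simp add: complex_add_cnj)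
    finally show ?thesis .
  qed
  then show ?thesis by (simp add: csm_def vec_eq_iff cscale)
qed


lemma inner_cplx: "inner (z::complex) w = Re (z * cnj w)"
  by (simp add: inner_complex_def)

lemma adj_inner: "inner (adj (X::complex^'c^'d) *v y) z = inner y (X *v z)"
proof -
  have "inner (adj X *v y) z = Re (\<Sum>i\<in>UNIV. \<Sum>j\<in>UNIV. cnj (X$j$i) * y$j * cnj (z$i))"
    by (simp add: inner_vec_def matrix_vector_mult_def adj_def inner_cplx sum_distrib_right Re_sum)
  also have "\<dots> = Re (\<Sum>j\<in>UNIV. \<Sum>i\<in>UNIV. cnj (X$j$i) * y$j * cnj (z$i))"
    by (subst sum.swap) simp
  also have "\<dots> = inner y (X *v z)"
    by (simp add: inner_vec_def matrix_vector_mult_def inner_cplx sum_distrib_left Re_sum mult_ac)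
  finally show ?thesis .
qed

lemma snorm_adj_le: "snorm (adj (X::complex^'c^'d)) \<le> snorm X"
  unfolding snorm_def
proof (rule onorm_bound)
  show "0 \<le> onorm (\<lambda>x. X *v x)" using snorm_nonneg[of X] by (simp add: snorm_def)
  fix y :: "complex^'d"
  define u where "u = adj X *v y"
  have "(norm u)\<^sup>2 = inner u u" by (simp add: power2_norm_eq_inner)
  also have "\<dots> = inner y (X *v u)" unfolding u_def by (rule adj_inner)
  also have "\<dots> \<le> norm y * norm (X *v u)" by (rule norm_cauchy_schwarz)
  also have "\<dots> \<le> norm y * (snorm X * norm u)"
    by (intro mult_left_mono snorm_vec norm_ge_zero)
  finally have h: "norm u * norm u \<le> (onorm (\<lambda>x. X *v x) * norm y) * norm u"
    by (simp add: power2_eq_square snorm_def mult_ac)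
  show "norm (adj X *v y) \<le> onorm (\<lambda>x. X *v x) * norm y"
  proof (cases "norm u = 0")
    case True then show ?thesis
      using snorm_nonneg[of X] by (simp add: u_def snorm_def)
  next
    case False then have "norm u > 0" by simp
    with h have "norm u \<le> onorm (\<lambda>x. X *v x) * norm y"
      by (simp add: mult_le_cancel_right)
    then show ?thesis by (simp add: u_def)
  qed
qed

lemma snorm_adj: "snorm (adj (X::complex^'c^'d)) = snorm X"
  using snorm_adj_le[of X] snorm_adj_le[of "adj X"] by simp


lemma step_id:
  fixes a m :: "complex^'n^'n" and V S W :: "complex^'r^'n" and g :: real
  assumes W: "W = S + a ** V + csm \<alpha> (m ** V)" and g: "2 * Re \<alpha> = - g\<^sup>2"
  shows "(W + g\<^sup>2 *\<^sub>R (m ** V)) ** adj (W + g\<^sup>2 *\<^sub>R (m ** V))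
    = W ** adj W + g\<^sup>2 *\<^sub>R (a ** (V ** adj V) ** adj m + m ** (V ** adj V) ** adj a)
      + g\<^sup>2 *\<^sub>R (S ** adj V ** adj m + m ** V ** adj S)"
proof -
  define X where "X = m ** V"
  define P where "P = X ** adj X"
  have e1: "W ** adj X = S ** adj X + a ** V ** adj X + csm \<alpha> P"
    unfolding W P_def by (simp add: mm_add_r csm_mult_l X_def)
  have e2: "X ** adj W = X ** adj S + X ** adj V ** adj a + csm (cnj \<alpha>) P"
    unfolding W P_def by (simp add: matrix_add_ldistrib adj_add adj_csm csm_mult_r adj_mult matrix_mul_assoc X_def)
  have e3: "csm \<alpha> P + csm (cnj \<alpha>) P = (- g\<^sup>2) *\<^sub>R P"
    using csm_cnj[of \<alpha> P] g by simp
  have "(W + g\<^sup>2 *\<^sub>R X) ** adj (W + g\<^sup>2 *\<^sub>R X)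
     = W ** adj W + g\<^sup>2 *\<^sub>R (W ** adj X) + g\<^sup>2 *\<^sub>R (X ** adj W) + (g\<^sup>2 * g\<^sup>2) *\<^sub>R P"
    by (simp add: mm_add_r matrix_add_ldistrib adj_add adj_scaleR scalar_matrix_assoc[symmetric]
        matrix_scalar_ac P_def algebra_simps)
  also have "\<dots> = W ** adj W + g\<^sup>2 *\<^sub>R (S ** adj X + a ** V ** adj X + X ** adj S + X ** adj V ** adj a)
       + g\<^sup>2 *\<^sub>R (csm \<alpha> P + csm (cnj \<alpha>) P) + (g\<^sup>2 * g\<^sup>2) *\<^sub>R P"
    unfolding e1 e2 by (simp add: algebra_simps)
  also have "\<dots> = W ** adj W + g\<^sup>2 *\<^sub>R (S ** adj X + a ** V ** adj X + X ** adj S + X ** adj V ** adj a)"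
    unfolding e3 by (simp add: algebra_simps)
  finally show ?thesis
    by (simp add: X_def adj_mult matrix_mul_assoc algebra_simps)
qed


lemma gamma_sq: "Re (\<alpha> k) \<le> 0 \<Longrightarrow> (adi_gamma \<alpha> k)\<^sup>2 = - 2 * Re (\<alpha> k)"
  by (simp add: adi_gamma_def)

lemma gap_eta:
  assumes neg: "\<And>k. 1 \<le> k \<Longrightarrow> k \<le> jmax \<Longrightarrow> Re (\<alpha> k) < 0" and "k \<le> jmax"
  shows "adi_gap A M B \<alpha> v k = adi_eta A M B \<alpha> v k + adj (adi_eta A M B \<alpha> v k)"
  using \<open>k \<le> jmax\<close>
proof (induction k)
  case 0
  then show ?case by (simp add: adi_gap_def adi_Rtrue_def adi_ZZ_def adi_eta_def adj_zero)
next
  case (Suc k)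
  define a where "a = cmat A"
  define m where "m = cmat M"
  define V where "V = v (Suc k)"
  define g where "g = adi_gamma \<alpha> (Suc k)"
  define W where "W = adi_w M B \<alpha> v k"
  define S where "S = adi_s A M B \<alpha> v (Suc k)"
  have IH: "adi_gap A M B \<alpha> v k = adi_eta A M B \<alpha> v k + adj (adi_eta A M B \<alpha> v k)"
    using Suc by simp
  have gg: "2 * Re (\<alpha> (Suc k)) = - g\<^sup>2"
    using gamma_sq[of \<alpha> "Suc k"] neg[of "Suc k"] Suc.prems by (simp add: g_def)
  have WS: "W = S + a ** V + csm (\<alpha> (Suc k)) (m ** V)"
    by (simp add: S_def W_def adi_s_def a_def m_def V_def mm_add_r mat_csm csm_mult_l matrix_mul_assoc)
  have ZZ: "adi_ZZ \<alpha> v (Suc k) = adi_ZZ \<alpha> v k + g\<^sup>2 *\<^sub>R (V ** adj V)"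
    by (simp add: adi_ZZ_def g_def V_def adj_scaleR scalar_matrix_assoc[symmetric] matrix_scalar_ac power2_eq_square)
  have R: "adi_Rtrue A M B \<alpha> v (Suc k) = adi_Rtrue A M B \<alpha> v k
      + g\<^sup>2 *\<^sub>R (a ** (V ** adj V) ** adj m + m ** (V ** adj V) ** adj a)"
    unfolding adi_Rtrue_def ZZ
    by (simp add: matrix_add_ldistrib mm_add_r scalar_matrix_assoc[symmetric] matrix_scalar_ac a_def m_def algebra_simps)
  have E: "adi_eta A M B \<alpha> v (Suc k) = adi_eta A M B \<alpha> v k - g\<^sup>2 *\<^sub>R (S ** adj V ** adj m)"
    by (simp add: adi_eta_def g_def V_def S_def m_def adj_scaleR scalar_matrix_assoc[symmetric] matrix_scalar_ac power2_eq_square)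
  have w: "adi_w M B \<alpha> v (Suc k) = W + g\<^sup>2 *\<^sub>R (m ** V)"
    by (simp add: W_def g_def m_def V_def)
  have adjE: "adj (S ** adj V ** adj m) = m ** V ** adj S"
    by (simp add: adj_mult matrix_mul_assoc)
  show ?case
    unfolding adi_gap_def R w step_id[OF WS gg] E
    using IH unfolding adi_gap_def W_def[symmetric]
    by (simp add: adj_diff adj_scaleR adjE algebra_simps)
qed


lemma inv_left: "invertible (T::complex^'n^'n) \<Longrightarrow> matrix_inv T ** T = mat 1"
  unfolding invertible_def matrix_inv_def by (rule someI2_ex) auto

lemma eta_step:
  assumes inv: "invertible (cmat A + mat (\<alpha> (Suc k)) ** cmat M)"
  shows "snorm (adi_eta A M B \<alpha> v (Suc k)) \<le> snorm (adi_eta A M B \<alpha> v k)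
    + (adi_gamma \<alpha> (Suc k))\<^sup>2 * adi_sigma A M \<alpha> (Suc k) * snorm (adi_s A M B \<alpha> v (Suc k))
       * (snorm (adi_w M B \<alpha> v k) + snorm (adi_s A M B \<alpha> v (Suc k)))"
proof -
  define T where "T = cmat A + mat (\<alpha> (Suc k)) ** cmat M"
  define m where "m = cmat M"
  define V where "V = v (Suc k)"
  define g where "g = adi_gamma \<alpha> (Suc k)"
  define W where "W = adi_w M B \<alpha> v k"
  define S where "S = adi_s A M B \<alpha> v (Suc k)"
  define \<sigma> where "\<sigma> = adi_sigma A M \<alpha> (Suc k)"
  have E: "adi_eta A M B \<alpha> v (Suc k) = adi_eta A M B \<alpha> v k - g\<^sup>2 *\<^sub>R (S ** adj (m ** V))"
    by (simp add: adi_eta_def g_def V_def S_def m_def adj_scaleR scalar_matrix_assoc[symmetric]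
        matrix_scalar_ac power2_eq_square adj_mult matrix_mul_assoc)
  have TV: "T ** V = W - S" by (simp add: S_def W_def adi_s_def T_def V_def)
  have mV: "m ** V = (m ** matrix_inv T) ** (T ** V)"
  proof -
    have "matrix_inv T ** T = mat 1" using inv_left[of T] inv by (simp add: T_def)
    have "(m ** matrix_inv T) ** (T ** V) = (m ** (matrix_inv T ** T)) ** V"
      by (simp only: matrix_mul_assoc[symmetric])
    also have "\<dots> = m ** V" using \<open>matrix_inv T ** T = mat 1\<close> by simp
    finally show ?thesis by simp
  qed
  have smV: "snorm (m ** V) \<le> \<sigma> * (snorm W + snorm S)"
  proof -
    have "snorm (m ** V) \<le> \<sigma> * snorm (W - S)"
    proof -
      have "\<sigma> = snorm (m ** matrix_inv T)" by (simp add: \<sigma>_def adi_sigma_def T_def m_def)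
      then show ?thesis unfolding mV TV by (simp add: snorm_mult)
    qed
    also have "\<dots> \<le> \<sigma> * (snorm W + snorm S)"
      by (intro mult_left_mono snorm_diff) (simp add: \<sigma>_def adi_sigma_def snorm_nonneg)
    finally show ?thesis .
  qed
  have "snorm (adi_eta A M B \<alpha> v (Suc k)) \<le> snorm (adi_eta A M B \<alpha> v k) + snorm (g\<^sup>2 *\<^sub>R (S ** adj (m ** V)))"
    unfolding E by (rule snorm_diff)
  also have "snorm (g\<^sup>2 *\<^sub>R (S ** adj (m ** V))) = g\<^sup>2 * snorm (S ** adj (m ** V))"
    by (simp add: snorm_scaleR)
  also have "\<dots> \<le> g\<^sup>2 * (snorm S * snorm (m ** V))"
    by (intro mult_left_mono) (auto simp: snorm_adj[symmetric, of "m ** V"] intro: snorm_mult)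
  also have "\<dots> \<le> g\<^sup>2 * (snorm S * (\<sigma> * (snorm W + snorm S)))"
    by (intro mult_left_mono smV snorm_nonneg zero_le_power2)
  finally show ?thesis by (simp add: g_def \<sigma>_def S_def W_def mult_ac)
qed


lemma num_bound:
  fixes x w c :: real
  assumes "0 \<le> x" "0 \<le> w" "x \<le> (1/2) * (sqrt (w\<^sup>2 + c) - w)"
  shows "4 * x * (x + w) \<le> c"
proof -
  have h: "2 * x + w \<le> sqrt (w\<^sup>2 + c)" using assms by simp
  then have "0 \<le> sqrt (w\<^sup>2 + c)" using assms by linarith
  then have nn: "0 \<le> w\<^sup>2 + c" by simp
  have "(2 * x + w)\<^sup>2 \<le> (sqrt (w\<^sup>2 + c))\<^sup>2"
    using h assms by (intro power_mono) auto
  also have "\<dots> = w\<^sup>2 + c" using nn by simp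
  finally show ?thesis by (simp add: power2_eq_square algebra_simps)
qed

lemma scale_bound:
  fixes p q d :: real
  assumes "0 < p" "q \<le> d * (2 / p)"
  shows "p / 2 * q \<le> d"
proof -
  have "p / 2 * q \<le> p / 2 * (d * (2 / p))" using assms by (intro mult_left_mono) auto
  also have "\<dots> = d" using assms by (simp add: field_simps)
  finally show ?thesis .
qed

theorem theorem3p6:
  fixes A M :: "real^'n^'n" and B :: "real^'r^'n"
    and \<alpha> :: "nat \<Rightarrow> complex" and v :: "nat \<Rightarrow> complex^'r^'n"
    and jmax :: nat and \<epsilon> :: real
  assumes "invertible M"
    and "jmax \<ge> 1"
    and "\<And>k. 1 \<le> k \<Longrightarrow> k \<le> jmax \<Longrightarrow> Re (\<alpha> k) < 0"
    and "\<And>k. 1 \<le> k \<Longrightarrow> k \<le> jmax \<Longrightarrow> invertible (cmat A + mat (\<alpha> k) ** cmat M)"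
    and "0 < \<epsilon>" and "\<epsilon> < 1"
  shows
    "((\<forall>k. 1 \<le> k \<and> k \<le> jmax \<longrightarrow>
         snorm (adi_s A M B \<alpha> v k)
           \<le> (1/2) * (sqrt ((snorm (adi_w M B \<alpha> v (k - 1)))\<^sup>2
                  + 2 * \<epsilon> / (adi_sigma A M \<alpha> k * (adi_gamma \<alpha> k)\<^sup>2 * real jmax))
                 - snorm (adi_w M B \<alpha> v (k - 1))))
      \<longrightarrow> snorm (adi_gap A M B \<alpha> v jmax) \<le> \<epsilon>)
   \<and> ((\<forall>k. 1 \<le> k \<and> k \<le> jmax \<longrightarrow>
         snorm (adi_s A M B \<alpha> v k)
           \<le> (1/2) * (sqrt ((snorm (adi_w M B \<alpha> v (k - 1)))\<^sup>2
                  + (real k * \<epsilon> / real jmax - 2 * snorm (adi_eta A M B \<alpha> v (k - 1)))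
                    * (2 / (adi_sigma A M \<alpha> k * (adi_gamma \<alpha> k)\<^sup>2)))
                 - snorm (adi_w M B \<alpha> v (k - 1))))
      \<longrightarrow> snorm (adi_gap A M B \<alpha> v jmax) \<le> \<epsilon>)"
proof -
  let ?eta = "adi_eta A M B \<alpha> v"
  let ?x = "\<lambda>k. snorm (adi_s A M B \<alpha> v k)"
  let ?w = "\<lambda>k. snorm (adi_w M B \<alpha> v k)"
  let ?p = "\<lambda>k. adi_sigma A M \<alpha> k * (adi_gamma \<alpha> k)\<^sup>2"
  have jpos: "0 < real jmax" using assms(2) by simp
  have step: "2 * snorm (?eta (Suc k)) \<le> 2 * snorm (?eta k) + ?p (Suc k) / 2 * (4 * ?x (Suc k) * (?x (Suc k) + ?w k))"
    if "Suc k \<le> jmax" for k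
  proof -
    have "snorm (?eta (Suc k)) \<le> snorm (?eta k)
      + (adi_gamma \<alpha> (Suc k))\<^sup>2 * adi_sigma A M \<alpha> (Suc k) * ?x (Suc k) * (?w k + ?x (Suc k))"
      by (rule eta_step) (use assms(4) that in auto)
    then show ?thesis by (simp add: algebra_simps)
  qed
  have pnn: "0 \<le> ?p k" for k
    by (simp add: adi_sigma_def snorm_nonneg)
  have fin: "snorm (adi_gap A M B \<alpha> v jmax) \<le> \<epsilon>" if h: "2 * snorm (?eta jmax) \<le> real jmax * \<epsilon> / real jmax"
  proof -
    have "snorm (adi_gap A M B \<alpha> v jmax) = snorm (?eta jmax + adj (?eta jmax))"
      using gap_eta[of jmax \<alpha> jmax A M B v] assms(3) by simp
    also have "\<dots> \<le> 2 * snorm (?eta jmax)" using snorm_add[of "?eta jmax" "adj (?eta jmax)"]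
      by (simp add: snorm_adj)
    also have "\<dots> \<le> \<epsilon>" using h jpos by simp
    finally show ?thesis .
  qed
  show ?thesis
  proof (intro conjI impI)
    assume H: "\<forall>k. 1 \<le> k \<and> k \<le> jmax \<longrightarrow>
         snorm (adi_s A M B \<alpha> v k)
           \<le> (1/2) * (sqrt ((snorm (adi_w M B \<alpha> v (k - 1)))\<^sup>2
                  + 2 * \<epsilon> / (adi_sigma A M \<alpha> k * (adi_gamma \<alpha> k)\<^sup>2 * real jmax))
                 - snorm (adi_w M B \<alpha> v (k - 1)))"
    have "k \<le> jmax \<Longrightarrow> 2 * snorm (?eta k) \<le> real k * \<epsilon> / real jmax" for k
    proof (induction k)
      case 0 then show ?case by (simp add: adi_eta_def snorm_def onorm_zero)
    next
      case (Suc k)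
      have hk: "?x (Suc k) \<le> (1/2) * (sqrt ((?w k)\<^sup>2 + 2 * \<epsilon> / (?p (Suc k) * real jmax)) - ?w k)"
        using H Suc.prems by (auto simp: mult.assoc)
      have q: "4 * ?x (Suc k) * (?x (Suc k) + ?w k) \<le> 2 * \<epsilon> / (?p (Suc k) * real jmax)"
        by (rule num_bound[OF snorm_nonneg snorm_nonneg hk])
      have t: "?p (Suc k) / 2 * (4 * ?x (Suc k) * (?x (Suc k) + ?w k)) \<le> \<epsilon> / real jmax"
      proof (cases "?p (Suc k) = 0")
        case True
        then have "?p (Suc k) / 2 * (4 * ?x (Suc k) * (?x (Suc k) + ?w k)) = 0" by (simp only: mult_zero_left div_0)
        moreover have "0 \<le> \<epsilon> / real jmax" using assms(5) jpos by simp
        ultimately show ?thesis by linarith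
      next
        case False
        then have pp: "0 < ?p (Suc k)" using pnn[of "Suc k"] by linarith
        have "2 * \<epsilon> / (?p (Suc k) * real jmax) = \<epsilon> / real jmax * (2 / ?p (Suc k))"
          using False jpos by (simp add: field_simps)
        then have q': "4 * ?x (Suc k) * (?x (Suc k) + ?w k) \<le> \<epsilon> / real jmax * (2 / ?p (Suc k))"
          using q by simp
        show ?thesis by (rule scale_bound[OF pp q'])
      qed
      have "2 * snorm (?eta (Suc k)) \<le> 2 * snorm (?eta k) + \<epsilon> / real jmax"
        using step[OF Suc.prems] t by linarith
      also have "\<dots> \<le> real k * \<epsilon> / real jmax + \<epsilon> / real jmax" using Suc by simp
      finally show ?case using jpos assms(5) by (simp add: field_simps)
    qed
    then show "snorm (adi_gap A M B \<alpha> v jmax) \<le> \<epsilon>" by (intro fin) blast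
  next
    assume H: "\<forall>k. 1 \<le> k \<and> k \<le> jmax \<longrightarrow>
         snorm (adi_s A M B \<alpha> v k)
           \<le> (1/2) * (sqrt ((snorm (adi_w M B \<alpha> v (k - 1)))\<^sup>2
                  + (real k * \<epsilon> / real jmax - 2 * snorm (adi_eta A M B \<alpha> v (k - 1)))
                    * (2 / (adi_sigma A M \<alpha> k * (adi_gamma \<alpha> k)\<^sup>2)))
                 - snorm (adi_w M B \<alpha> v (k - 1)))"
    have "k \<le> jmax \<Longrightarrow> 2 * snorm (?eta k) \<le> real k * \<epsilon> / real jmax" for k
    proof (induction k)
      case 0 then show ?case by (simp add: adi_eta_def snorm_def onorm_zero)
    next
      case (Suc k)
      let ?d = "real (Suc k) * \<epsilon> / real jmax - 2 * snorm (?eta k)"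
      have hk: "?x (Suc k) \<le> (1/2) * (sqrt ((?w k)\<^sup>2 + ?d * (2 / ?p (Suc k))) - ?w k)"
        using H Suc.prems by auto
      have q: "4 * ?x (Suc k) * (?x (Suc k) + ?w k) \<le> ?d * (2 / ?p (Suc k))"
        by (rule num_bound[OF snorm_nonneg snorm_nonneg hk])
      show ?case
      proof (cases "?p (Suc k) = 0")
        case True
        then have "?p (Suc k) / 2 * (4 * ?x (Suc k) * (?x (Suc k) + ?w k)) = 0"
          by (simp only: mult_zero_left div_0)
        then have "2 * snorm (?eta (Suc k)) \<le> 2 * snorm (?eta k)"
          using step[OF Suc.prems] by linarith
        also have "\<dots> \<le> real k * \<epsilon> / real jmax" using Suc by simp
        also have "\<dots> \<le> real (Suc k) * \<epsilon> / real jmax"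
          using jpos assms(5) by (intro divide_right_mono mult_right_mono) auto
        finally show ?thesis .
      next
        case False
        then have pp: "0 < ?p (Suc k)" using pnn[of "Suc k"] by linarith
        have "?p (Suc k) / 2 * (4 * ?x (Suc k) * (?x (Suc k) + ?w k)) \<le> ?d"
          by (rule scale_bound[OF pp q])
        then show ?thesis using step[OF Suc.prems] by linarith
      qed
    qed
    then show "snorm (adi_gap A M B \<alpha> v jmax) \<le> \<epsilon>" by (intro fin) blast
  qed
qed

end
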